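(* Let $G\subsetneq\mathbb{R}^N$ be an open set, $M>0$ and $1<q<p$. There exists $c_5=c_5(N,p,q)>0$ such that every nonnegative solution $u\in C^2(G)$ of $-\Delta u+u^p-M|\nabla u|^q=0$ in $G$ satisfies $$u(x)\le c_5\max\left\{M^{\frac{1}{p-q}}\,d_G(x)^{-\frac{q}{p-q}},\ d_G(x)^{-\frac{2}{p-1}}\right\}\quad\text{for all }x\in G,$$ where $d_G(x)=\mathrm{dist}(x,\partial G)$. *)

theory Defs
  imports "HOL-Analysis.Analysis"
begin

definition C2_on :: "'a::euclidean_space set \<Rightarrow> ('a \<Rightarrow> real) \<Rightarrow> bool" where
  "C2_on G u \<longleftrightarrow> (\<exists>Du :: 'a \<Rightarrow> ('a \<Rightarrow>\<^sub>L real). \<exists>D2u :: 'a \<Rightarrow> ('a \<Rightarrow>\<^sub>L ('a \<Rightarrow>\<^sub>L real)).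
      (\<forall>x\<in>G. (u has_derivative blinfun_apply (Du x)) (at x)) \<and>
      (\<forall>x\<in>G. (Du has_derivative blinfun_apply (D2u x)) (at x)) \<and>
      continuous_on G D2u)"

definition grad :: "('a::euclidean_space \<Rightarrow> real) \<Rightarrow> 'a \<Rightarrow> 'a" where
  "grad u x = (\<Sum>i\<in>Basis. frechet_derivative u (at x) i *\<^sub>R i)"

definition laplacian :: "('a::euclidean_space \<Rightarrow> real) \<Rightarrow> 'a \<Rightarrow> real" where
  "laplacian u x = (\<Sum>i\<in>Basis. frechet_derivative (\<lambda>y. frechet_derivative u (at y) i) (at x) i)"

definition dist_bd :: "'a::euclidean_space set \<Rightarrow> 'a \<Rightarrow> real" where
  "dist_bd G x = infdist x (frontier G)"

end

theory Submission
  imports Defs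
begin

lemma max_second_deriv:
  fixes g g' :: "real \<Rightarrow> real"
  assumes e: "e > 0"
  and d1: "\<And>t. -e < t \<Longrightarrow> t < e \<Longrightarrow> (g has_real_derivative g' t) (at t)"
  and d2: "(g' has_real_derivative g2) (at 0)"
  and mx: "\<And>t. -e < t \<Longrightarrow> t < e \<Longrightarrow> g t \<le> g 0"
  shows "g' 0 = 0 \<and> g2 \<le> 0"
proof
  show g0: "g' 0 = 0"
    by (rule DERIV_local_max[OF d1 e]) (use e mx in auto)
  show "g2 \<le> 0"
  proof (rule ccontr)
    assume "\<not> g2 \<le> 0"
    then obtain d where d: "d > 0" "\<And>h. h > 0 \<Longrightarrow> h < d \<Longrightarrow> g' 0 < g' (0 + h)"
      using DERIV_pos_inc_right[OF d2] by force
    define h where "h = min d e / 2"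
    have h: "0 < h" "h < d" "h < e" using d e by (auto simp: h_def)
    obtain \<xi> where xi: "0 < \<xi>" "\<xi> < h" "g h - g 0 = (h - 0) * g' \<xi>"
      using MVT2[of 0 h g g'] h d1 e by force
    have "g' \<xi> > 0" using d(2)[of \<xi>] xi h g0 by simp
    have "h * g' \<xi> > 0" using h(1) \<open>g' \<xi> > 0\<close> by (rule mult_pos_pos)
    hence "g h > g 0" using xi(3) by (metis diff_gt_0_iff_gt diff_zero)
    with mx[of h] h e show False by auto
  qed
qed

lemma line_deriv_u:
  fixes u :: "'a::euclidean_space \<Rightarrow> real"
  assumes "(u has_derivative blinfun_apply L) (at (z + t *\<^sub>R e))"
  shows "((\<lambda>t. u (z + t *\<^sub>R e)) has_real_derivative (L e)) (at t)"
proof -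
  have l: "((\<lambda>t. z + t *\<^sub>R e) has_derivative (\<lambda>s. s *\<^sub>R e)) (at t)"
    by (auto intro!: derivative_eq_intros)
  have "((\<lambda>t. u (z + t *\<^sub>R e)) has_derivative (\<lambda>s. L (s *\<^sub>R e))) (at t)"
    using has_derivative_compose[OF l assms] .
  moreover have "(\<lambda>s. L (s *\<^sub>R e)) = (*) (L e)"
    by (auto simp: blinfun.scaleR_right)
  ultimately show ?thesis by (simp add: has_field_derivative_def)
qed

lemma line_deriv_Du:
  fixes Du :: "'a::euclidean_space \<Rightarrow> ('a \<Rightarrow>\<^sub>L real)"
  assumes "(Du has_derivative blinfun_apply L) (at z)"
  shows "((\<lambda>t. Du (z + t *\<^sub>R e) e) has_real_derivative (L e e)) (at 0)"
proof -
  have l: "((\<lambda>t. z + t *\<^sub>R e) has_derivative (\<lambda>s. s *\<^sub>R e)) (at 0)"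
    by (auto intro!: derivative_eq_intros)
  have a: "(Du has_derivative blinfun_apply L) (at (z + 0 *\<^sub>R e))" using assms by simp
  have "((\<lambda>t. Du (z + t *\<^sub>R e)) has_derivative (\<lambda>s. L (s *\<^sub>R e))) (at 0)"
    using has_derivative_compose[OF l a] .
  then have "((\<lambda>t. Du (z + t *\<^sub>R e) e) has_derivative (\<lambda>s. L (s *\<^sub>R e) e)) (at 0)"
    by (auto intro!: derivative_eq_intros)
  moreover have "(\<lambda>s. L (s *\<^sub>R e) e) = (*) (L e e)"
    by (auto simp: blinfun.scaleR_right blinfun.scaleR_left)
  ultimately show ?thesis by (simp add: has_field_derivative_def)
qed

lemma phi_deriv:
  fixes A \<beta> h0 a t :: real
  assumes "h0 - 2*t*a - t^2 > 0"
  shows "((\<lambda>t. A * (h0 - 2*t*a - t^2) powr (-\<beta>)) has_real_derivative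
           2*A*\<beta>*(a+t)*(h0 - 2*t*a - t^2) powr (-\<beta>-1)) (at t)"
  using assms
  apply (rule_tac derivative_eq_intros DERIV_fun_powr)+
  apply (auto intro!: derivative_eq_intros simp: algebra_simps)
  done

lemma phi_deriv2:
  fixes A \<beta> h0 a :: real
  assumes "h0 > 0"
  shows "((\<lambda>t. 2*A*\<beta>*(a+t)*(h0 - 2*t*a - t^2) powr (-\<beta>-1)) has_real_derivative
           2*A*\<beta>*(h0 powr (-\<beta>-1) + 2*(\<beta>+1)*a^2*h0 powr (-\<beta>-2))) (at 0)"
proof -
  have "((\<lambda>t. 2*A*\<beta>*(a+t)*(h0 - 2*t*a - t^2) powr (-\<beta>-1)) has_real_derivative
      2*A*\<beta>*1*(h0 - 2*0*a - 0^2) powr (-\<beta>-1) + 2*A*\<beta>*(a+0) * ((-\<beta>-1) * (h0 - 2*0*a - 0^2) powr (-\<beta>-1 - of_nat 1) * (-2*a - 2*0))) (at 0)"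
    using assms
    by (intro derivative_eq_intros DERIV_fun_powr) (auto intro!: derivative_eq_intros)
  moreover have "2*A*\<beta>*1*(h0 - 2*0*a - 0^2) powr (-\<beta>-1) + 2*A*\<beta>*(a+0) * ((-\<beta>-1) * (h0 - 2*0*a - 0^2) powr (-\<beta>-1 - of_nat 1) * (-2*a - 2*0))
     = 2*A*\<beta>*(h0 powr (-\<beta>-1) + 2*(\<beta>+1)*a^2*h0 powr (-\<beta>-2))"
    by (simp add: algebra_simps power2_eq_square)
  ultimately show ?thesis by simp
qed

lemma core:
  fixes u :: "'a::euclidean_space \<Rightarrow> real" and Du :: "'a \<Rightarrow> ('a \<Rightarrow>\<^sub>L real)"
    and D2u :: "'a \<Rightarrow> ('a \<Rightarrow>\<^sub>L ('a \<Rightarrow>\<^sub>L real))"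
  assumes G: "open G" and sub: "cball x0 r \<subseteq> G" and r: "r > 0" and A: "A > 0"
    and \<beta>: "\<beta> > 0" and p: "p > 0" and M: "M > 0"
    and du: "\<forall>x\<in>G. (u has_derivative blinfun_apply (Du x)) (at x)"
    and d2u: "\<forall>x\<in>G. (Du has_derivative blinfun_apply (D2u x)) (at x)"
    and nonneg: "\<forall>x\<in>G. u x \<ge> 0"
    and eq: "\<forall>x\<in>G. - laplacian u x + u x powr p - M * norm (grad u x) powr q = 0"
    and bar: "\<And>c0. 0 < c0 \<Longrightarrow> c0 \<le> r^2 \<Longrightarrow>
       2*A*\<beta>*(real DIM('a) * c0 powr (-\<beta>-1) + 2*(\<beta>+1)*(r^2-c0)*c0 powr (-\<beta>-2))
       + M*(2*A*\<beta>*c0 powr (-\<beta>-1)* sqrt (r^2-c0)) powr q < (A * c0 powr (-\<beta>)) powr p"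
  shows "u x0 < A * (r^2) powr (-\<beta>)"
proof -
  define w where "w y = A * (r^2 - norm (y - x0)^2) powr (-\<beta>)" for y
  define f where "f y = u y - w y" for y
  have ucont: "continuous_on G u"
    using du by (meson continuous_at_imp_continuous_on has_derivative_continuous)
  obtain y0 where "y0 \<in> cball x0 r" "\<forall>y\<in>cball x0 r. u y \<le> u y0"
    using continuous_attains_sup[of "cball x0 r" u] continuous_on_subset[OF ucont sub] r by force
  then obtain B where B: "\<And>y. y \<in> cball x0 r \<Longrightarrow> u y \<le> B" by blast
  define Q where "Q = (B + w x0)/A"
  define \<delta> where "\<delta> = min (r^2/2) ((\<bar>Q\<bar>+1) powr (-1/\<beta>))"
  have r2: "r^2 > 0" using r by simp
  have \<delta>1: "0 < \<delta>" "\<delta> < r^2" using r2 by (auto simp: \<delta>_def min_less_iff_disj)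
  have "((\<bar>Q\<bar>+1) powr (-1/\<beta>)) powr (-\<beta>) \<le> \<delta> powr (-\<beta>)"
    by (rule powr_mono2') (use \<beta> \<delta>1 in \<open>auto simp: \<delta>_def\<close>)
  moreover have "((\<bar>Q\<bar>+1) powr (-1/\<beta>)) powr (-\<beta>) = \<bar>Q\<bar>+1"
    using \<beta> by (simp add: powr_powr)
  ultimately have \<delta>2: "\<delta> powr (-\<beta>) > Q" by linarith
  define \<rho> where "\<rho> = sqrt (r^2 - \<delta>)"
  have "sqrt (r^2 - \<delta>) < sqrt (r^2)" using \<delta>1 by (intro real_sqrt_less_mono) auto
  hence \<rho>: "0 < \<rho>" "\<rho> < r" "\<rho>^2 = r^2 - \<delta>"
    using \<delta>1 r by (auto simp: \<rho>_def)
  have cb: "cball x0 \<rho> \<subseteq> cball x0 r" using \<rho> by auto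
  have hpos: "r^2 - norm (y - x0)^2 \<ge> \<delta>" if "y \<in> cball x0 \<rho>" for y
  proof -
    have "norm (y - x0) \<le> \<rho>" using that by (simp add: dist_norm norm_minus_commute)
    hence "norm (y - x0)^2 \<le> \<rho>^2" by (simp add: power_mono)
    thus ?thesis using \<rho> by linarith
  qed
  have wcont: "continuous_on (cball x0 \<rho>) w"
    unfolding w_def
    by (intro continuous_intros) (use hpos \<delta>1 in force)
  have fcont: "continuous_on (cball x0 \<rho>) f"
    unfolding f_def by (intro continuous_intros continuous_on_subset[OF ucont] wcont) (use cb sub in auto)
  obtain z where z: "z \<in> cball x0 \<rho>" and zmax: "\<And>y. y \<in> cball x0 \<rho> \<Longrightarrow> f y \<le> f z"
    using continuous_attains_sup[OF compact_cball _ fcont] \<rho> by force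
  have zG: "z \<in> G" using z cb sub by auto
  have x0G: "x0 \<in> G" using sub r by auto
  have zin: "dist x0 z < \<rho>"
  proof (rule ccontr)
    assume "\<not> dist x0 z < \<rho>"
    hence "norm (z - x0) = \<rho>" using z by (simp add: dist_norm norm_minus_commute)
    hence "w z = A * \<delta> powr (-\<beta>)" using \<rho> by (simp add: w_def)
    also have "\<dots> > A * Q" using \<delta>2 A by simp
    also have "A * Q = B + w x0" using A by (simp add: Q_def)
    finally have "w z > B + w x0" .
    moreover have "u z \<le> B" using B z cb by auto
    moreover have "f x0 \<le> f z" using zmax \<rho> by simp
    moreover have "u x0 \<ge> 0" using nonneg x0G by auto
    ultimately show False by (simp add: f_def)
  qed
  define \<epsilon> where "\<epsilon> = \<rho> - dist x0 z"
  have \<epsilon>: "\<epsilon> > 0" using zin by (simp add: \<epsilon>_def)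
  define h0 where "h0 = r^2 - norm (z - x0)^2"
  have h0: "h0 > 0" "h0 \<le> r^2" using hpos[OF z] \<delta>1 by (auto simp: h0_def)
  have key: "Du z e = 2*A*\<beta>*((z-x0)\<bullet>e)*h0 powr (-\<beta>-1) \<and>
     D2u z e e \<le> 2*A*\<beta>*(h0 powr (-\<beta>-1) + 2*(\<beta>+1)*((z-x0)\<bullet>e)^2*h0 powr (-\<beta>-2))"
    if e: "e \<in> Basis" for e
  proof -
    define a where "a = (z-x0)\<bullet>e"
    have ne: "norm e = 1" "e \<bullet> e = 1" using e by auto
    have nexp: "norm (z + t *\<^sub>R e - x0)^2 = norm (z - x0)^2 + 2*t*a + t^2" for t
    proof -
      have eqv: "z + t *\<^sub>R e - x0 = (z - x0) + t *\<^sub>R e" by simp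
      have "norm (z + t *\<^sub>R e - x0)^2 = ((z - x0) + t *\<^sub>R e) \<bullet> ((z - x0) + t *\<^sub>R e)"
        unfolding eqv by (simp add: power2_norm_eq_inner)
      also have "\<dots> = (z-x0)\<bullet>(z-x0) + 2*t*a + t^2*(e\<bullet>e)"
        by (simp add: inner_add_left inner_add_right a_def inner_commute power2_eq_square algebra_simps)
      finally show ?thesis using ne by (simp add: power2_norm_eq_inner)
    qed
    have wline: "w (z + t *\<^sub>R e) = A * (h0 - 2*t*a - t^2) powr (-\<beta>)" for t
      by (simp add: w_def nexp h0_def algebra_simps)
    have inball: "z + t *\<^sub>R e \<in> ball x0 \<rho>" if "-\<epsilon> < t" "t < \<epsilon>" for t
    proof -
      have "dist x0 (z + t *\<^sub>R e) \<le> dist x0 z + dist z (z + t *\<^sub>R e)" by (rule dist_triangle)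
      also have "dist z (z + t *\<^sub>R e) = \<bar>t\<bar>" using ne by (simp add: dist_norm)
      finally show ?thesis using that by (auto simp: \<epsilon>_def)
    qed
    have Hpos: "h0 - 2*t*a - t^2 > 0" if "-\<epsilon> < t" "t < \<epsilon>" for t
    proof -
      have "r^2 - norm (z + t *\<^sub>R e - x0)^2 \<ge> \<delta>" using hpos inball[OF that] by auto
      thus ?thesis using nexp[of t] \<delta>1 by (simp add: h0_def)
    qed
    define g where "g t = u (z + t *\<^sub>R e) - A * (h0 - 2*t*a - t^2) powr (-\<beta>)" for t
    define g' where "g' t = Du (z + t *\<^sub>R e) e - 2*A*\<beta>*(a+t)*(h0 - 2*t*a - t^2) powr (-\<beta>-1)" for t
    have "g' 0 = 0 \<and> D2u z e e - 2*A*\<beta>*(h0 powr (-\<beta>-1) + 2*(\<beta>+1)*a^2*h0 powr (-\<beta>-2)) \<le> 0"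
    proof (rule max_second_deriv[OF \<epsilon>])
      fix t assume t: "-\<epsilon> < t" "t < \<epsilon>"
      have "z + t *\<^sub>R e \<in> G" using inball[OF t] cb sub ball_subset_cball by blast
      hence "(u has_derivative blinfun_apply (Du (z + t *\<^sub>R e))) (at (z + t *\<^sub>R e))" using du by auto
      from DERIV_diff[OF line_deriv_u[OF this] phi_deriv[OF Hpos[OF t], of A \<beta>]]
      show "(g has_real_derivative g' t) (at t)" unfolding g_def g'_def by simp
      have "z + t *\<^sub>R e \<in> cball x0 \<rho>" using inball[OF t] by auto
      hence "f (z + t *\<^sub>R e) \<le> f z" by (rule zmax)
      thus "g t \<le> g 0" using wline[of t] wline[of 0] by (simp add: g_def f_def)
    next
      have "(Du has_derivative blinfun_apply (D2u z)) (at z)" using d2u zG by auto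
      from DERIV_diff[OF line_deriv_Du[OF this, of e] phi_deriv2[OF h0(1), of A \<beta> a]]
      show "(g' has_real_derivative D2u z e e - 2*A*\<beta>*(h0 powr (-\<beta>-1) + 2*(\<beta>+1)*a^2*h0 powr (-\<beta>-2))) (at 0)"
        unfolding g'_def by simp
    qed
    thus ?thesis by (simp add: g'_def a_def)
  qed
  have fdu: "frechet_derivative u (at y) = blinfun_apply (Du y)" if "y \<in> G" for y
    using frechet_derivative_at[of u "blinfun_apply (Du y)" y] du that by auto
  define k where "k = 2*A*\<beta>*h0 powr (-\<beta>-1)"
  have "grad u z = (\<Sum>e\<in>Basis. (k * ((z-x0)\<bullet>e)) *\<^sub>R e)"
    unfolding grad_def fdu[OF zG] by (intro sum.cong refl) (simp add: key k_def algebra_simps)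
  also have "\<dots> = k *\<^sub>R (\<Sum>e\<in>Basis. ((z-x0)\<bullet>e) *\<^sub>R e)"
    by (simp add: scaleR_sum_right)
  also have "\<dots> = k *\<^sub>R (z - x0)" by (simp add: euclidean_representation)
  finally have gradz: "grad u z = k *\<^sub>R (z - x0)" .
  have nz: "norm (z - x0) = sqrt (r^2 - h0)" by (simp add: h0_def)
  have k0: "k \<ge> 0" using A \<beta> by (simp add: k_def)
  have ngrad: "norm (grad u z) = 2*A*\<beta>*h0 powr (-\<beta>-1) * sqrt (r^2 - h0)"
    using k0 by (simp add: gradz nz k_def)
  have lapl: "frechet_derivative (\<lambda>y. frechet_derivative u (at y) e) (at z) e = D2u z e e" for e
  proof -
    have d: "(Du has_derivative blinfun_apply (D2u z)) (at z)" using d2u zG by auto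
    have "((\<lambda>y. Du y e) has_derivative (\<lambda>v. D2u z v e)) (at z)"
      using d by (auto intro!: derivative_eq_intros)
    hence "((\<lambda>y. frechet_derivative u (at y) e) has_derivative (\<lambda>v. D2u z v e)) (at z)"
      by (rule has_derivative_transform_within_open[OF _ G zG]) (simp add: fdu)
    from frechet_derivative_at[OF this] show ?thesis by metis
  qed
  have sq: "(\<Sum>e\<in>Basis. ((z-x0)\<bullet>e)^2) = norm (z - x0)^2"
    unfolding power2_norm_eq_inner euclidean_inner[of "z-x0" "z-x0"] by (simp add: power2_eq_square)
  have "laplacian u z = (\<Sum>e\<in>Basis. D2u z e e)"
    unfolding laplacian_def by (simp add: lapl)
  also have "\<dots> \<le> (\<Sum>e\<in>Basis. 2*A*\<beta>*(h0 powr (-\<beta>-1) + 2*(\<beta>+1)*((z-x0)\<bullet>e)^2*h0 powr (-\<beta>-2)))"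
    by (intro sum_mono) (use key in blast)
  also have "\<dots> = 2*A*\<beta>*(real DIM('a) * h0 powr (-\<beta>-1) + 2*(\<beta>+1)*(\<Sum>e\<in>Basis. ((z-x0)\<bullet>e)^2)*h0 powr (-\<beta>-2))"
    by (simp add: sum.distrib sum_distrib_left sum_distrib_right algebra_simps)
  also have "\<dots> = 2*A*\<beta>*(real DIM('a) * h0 powr (-\<beta>-1) + 2*(\<beta>+1)*(r^2-h0)*h0 powr (-\<beta>-2))"
    by (simp add: sq h0_def)
  finally have lap: "laplacian u z \<le> \<dots>" .
  have "u z powr p = laplacian u z + M * norm (grad u z) powr q"
    using eq zG by force
  also have "\<dots> < (A * h0 powr (-\<beta>)) powr p"
    using lap bar[OF h0] ngrad by simp
  also have "A * h0 powr (-\<beta>) = w z" by (simp add: w_def h0_def)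
  finally have upw: "u z powr p < w z powr p" .
  have uzw: "u z < w z"
  proof (rule ccontr)
    assume "\<not> u z < w z"
    hence "w z powr p \<le> u z powr p"
      using p A by (intro powr_mono2) (auto simp: w_def)
    with upw show False by simp
  qed
  have "f x0 \<le> f z" using zmax \<rho> by simp
  hence "u x0 < w x0" using uzw by (simp add: f_def)
  thus ?thesis by (simp add: w_def)
qed

lemma powr_split: "(x::real) > 0 \<Longrightarrow> a = b + c \<Longrightarrow> x powr a = x powr b * x powr c"
  by (simp add: powr_add)

lemma powr_split3: "(x::real) > 0 \<Longrightarrow> a = b + c + d \<Longrightarrow> x powr a = x powr b * x powr c * x powr d"
  by (simp add: powr_add)

lemma powr_div_cancel: "(x::real) > 0 \<Longrightarrow> e \<noteq> 0 \<Longrightarrow> (x powr (a/e)) powr e = x powr a"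
  by (simp add: powr_powr)

lemma barrier:
  fixes N p q \<beta> X R2 M c0 :: real
  assumes N: "N \<ge> 0" and pq: "q < p" and q: "1 < q" and \<beta>: "\<beta> > 0"
    and b1: "\<beta>*(p-1) \<ge> 2" and b2: "\<beta>*(p-q) \<ge> q"
    and R2: "R2 > 0" and M: "M > 0" and X: "X > 0" and c0: "0 < c0" "c0 \<le> R2"
    and X1: "3*(2*\<beta>*(N+2*\<beta>+2)) / R2 \<le> X powr (p-1)"
    and X2: "3*M*(2*\<beta>) powr q * R2 powr (-q/2) \<le> X powr (p-q)"
  shows "2*(X * R2 powr \<beta>)*\<beta>*(N * c0 powr (-\<beta>-1) + 2*(\<beta>+1)*(R2-c0)*c0 powr (-\<beta>-2))
       + M*(2*(X * R2 powr \<beta>)*\<beta>*c0 powr (-\<beta>-1) * sqrt (R2-c0)) powr q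
       < ((X * R2 powr \<beta>) * c0 powr (-\<beta>)) powr p"
proof -
  define A where "A = X * R2 powr \<beta>"
  define K1 where "K1 = 2*\<beta>*(N+2*\<beta>+2)"
  define T where "T = c0 powr (-\<beta>*p)"
  have A0: "A > 0" using X R2 by (simp add: A_def)
  have T0: "T > 0" using c0 by (simp add: T_def)
  have K10: "K1 \<ge> 0" using N \<beta> by (simp add: K1_def)
  have Ap: "A powr p = X powr p * R2 powr (\<beta>*p)"
    using X R2 by (simp add: A_def powr_mult powr_powr)
  have Xp1: "X powr p = X powr (p-1) * X"
    using powr_split[OF X, of p "p-1" 1] X by simp
  have Xpq: "X powr p = X powr (p-q) * X powr q"
    by (rule powr_split[OF X]) simp
  have Rp1: "R2 powr (\<beta>*p) = R2 * R2 powr (\<beta>*p-1)"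
    using powr_split[OF R2, of "\<beta>*p" 1 "\<beta>*p-1"] R2 by simp
  have rhs: "(A * c0 powr (-\<beta>)) powr p = A powr p * T"
    using A0 c0 by (simp add: powr_mult powr_powr T_def)
  have e1: "c0 powr (-\<beta>-1) = c0 * c0 powr (-\<beta>-2)"
    using powr_split[OF c0(1), of "-\<beta>-1" 1 "-\<beta>-2"] c0 by simp
  have e2: "c0 powr (-\<beta>-2) = T * c0 powr (\<beta>*p-\<beta>-2)"
    unfolding T_def by (rule powr_split[OF c0(1)]) simp
  have m2: "c0 powr (\<beta>*p-\<beta>-2) \<le> R2 powr (\<beta>*p-\<beta>-2)"
    using c0 b1 by (intro powr_mono2) (auto simp: algebra_simps)
  have cpos: "c0 powr (-\<beta>-2) \<ge> 0" by simp
  have L1a: "2*A*\<beta>*(N * c0 powr (-\<beta>-1) + 2*(\<beta>+1)*(R2-c0)*c0 powr (-\<beta>-2))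
      \<le> 2*A*\<beta>*(N * (R2 * c0 powr (-\<beta>-2)) + 2*(\<beta>+1)*R2*c0 powr (-\<beta>-2))"
    unfolding e1 using A0 \<beta> N c0 cpos
    by (intro mult_left_mono add_mono mult_right_mono) auto
  also have "\<dots> = K1 * A * R2 * c0 powr (-\<beta>-2)" by (simp add: K1_def algebra_simps)
  also have "\<dots> \<le> K1 * A * R2 * (T * R2 powr (\<beta>*p-\<beta>-2))"
    unfolding e2 using K10 A0 R2 T0 m2 by (intro mult_left_mono) auto
  also have "\<dots> = K1 * X * R2 powr (\<beta>*p - 1) * T"
  proof -
    have "R2 powr (\<beta>*p - 1) = R2 powr \<beta> * R2 powr 1 * R2 powr (\<beta>*p-\<beta>-2)"
      by (rule powr_split3[OF R2]) simp
    hence "A * R2 * R2 powr (\<beta>*p-\<beta>-2) = X * R2 powr (\<beta>*p - 1)"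
      using R2 by (simp add: A_def)
    thus ?thesis by (simp add: algebra_simps)
  qed
  also have "\<dots> \<le> A powr p * T / 3"
  proof -
    have "3*K1 \<le> X powr (p-1) * R2" using X1 R2 by (simp add: K1_def divide_le_eq)
    hence "3*K1 * (X * R2 powr (\<beta>*p - 1)) \<le> X powr (p-1) * R2 * (X * R2 powr (\<beta>*p - 1))"
      using X R2 by (intro mult_right_mono) auto
    also have "\<dots> = A powr p"
      unfolding Ap Xp1 Rp1 by (simp add: mult_ac)
    finally show ?thesis using T0 by (simp add: field_simps)
  qed
  finally have L1: "2*A*\<beta>*(N * c0 powr (-\<beta>-1) + 2*(\<beta>+1)*(R2-c0)*c0 powr (-\<beta>-2)) \<le> A powr p * T / 3" .
  have sq: "sqrt (R2-c0) \<le> R2 powr (1/2)"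
    using c0 R2 by (simp add: powr_half_sqrt)
  have base0: "0 \<le> 2*A*\<beta>*c0 powr (-\<beta>-1) * sqrt (R2-c0)" using A0 \<beta> c0 by simp
  have "(2*A*\<beta>*c0 powr (-\<beta>-1) * sqrt (R2-c0)) powr q \<le> (2*A*\<beta>*c0 powr (-\<beta>-1) * R2 powr (1/2)) powr q"
    using q base0 sq A0 \<beta> by (intro powr_mono2 mult_left_mono) auto
  also have "\<dots> = (((2*\<beta>) * A) * c0 powr (-\<beta>-1) * R2 powr (1/2)) powr q"
    by (simp add: mult_ac)
  also have "\<dots> = (2*\<beta>) powr q * A powr q * (c0 powr (-\<beta>-1)) powr q * (R2 powr (1/2)) powr q"
    using A0 \<beta> by (simp add: powr_mult)
  also have "\<dots> = (2*\<beta>) powr q * A powr q * c0 powr (-(\<beta>+1)*q) * R2 powr (q/2)"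
    by (simp add: powr_powr)
  also have "c0 powr (-(\<beta>+1)*q) = T * c0 powr (\<beta>*p-(\<beta>+1)*q)"
    using c0 by (simp add: T_def powr_add[symmetric] algebra_simps)
  also have "(2*\<beta>) powr q * A powr q * (T * c0 powr (\<beta>*p-(\<beta>+1)*q)) * R2 powr (q/2)
      \<le> (2*\<beta>) powr q * A powr q * (T * R2 powr (\<beta>*p-(\<beta>+1)*q)) * R2 powr (q/2)"
    using c0 b2 T0 by (intro mult_left_mono mult_right_mono powr_mono2) (auto simp: algebra_simps)
  also have "\<dots> = (2*\<beta>) powr q * X powr q * R2 powr (\<beta>*p - q/2) * T"
    using X R2 by (simp add: A_def powr_mult powr_powr powr_add[symmetric] algebra_simps)
  finally have L2a: "(2*A*\<beta>*c0 powr (-\<beta>-1) * sqrt (R2-c0)) powr q \<le> (2*\<beta>) powr q * X powr q * R2 powr (\<beta>*p - q/2) * T" .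
  have L2: "M * (2*A*\<beta>*c0 powr (-\<beta>-1) * sqrt (R2-c0)) powr q \<le> A powr p * T / 3"
  proof -
    have "M * (2*A*\<beta>*c0 powr (-\<beta>-1) * sqrt (R2-c0)) powr q \<le> M * ((2*\<beta>) powr q * X powr q * R2 powr (\<beta>*p - q/2) * T)"
      using L2a M by simp
    also have "\<dots> = (3*M*(2*\<beta>) powr q * R2 powr (-q/2)) * (X powr q * R2 powr (\<beta>*p)) * T / 3"
      using R2 by (simp add: powr_add[symmetric] algebra_simps)
    also have "\<dots> \<le> X powr (p-q) * (X powr q * R2 powr (\<beta>*p)) * T / 3"
      using X2 T0 by (intro divide_right_mono mult_right_mono) auto
    also have "X powr (p-q) * (X powr q * R2 powr (\<beta>*p)) = A powr p"
      unfolding Ap Xpq by (simp add: mult_ac)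
    finally show ?thesis .
  qed
  have "A powr p * T / 3 + A powr p * T / 3 < A powr p * T" using A0 T0 by simp
  with L1 L2 rhs show ?thesis unfolding A_def by linarith
qed

lemma ball_infdist_frontier:
  fixes G :: "'a::euclidean_space set"
  assumes "open G" "x \<in> G" "G \<noteq> UNIV"
  shows "dist_bd G x > 0" "ball x (dist_bd G x) \<subseteq> G"
proof -
  have fne: "frontier G \<noteq> {}" using frontier_not_empty[of G] assms by auto
  have xnf: "x \<notin> frontier G" using assms by (simp add: frontier_def interior_open)
  show "dist_bd G x > 0" unfolding dist_bd_def
    by (rule infdist_pos_not_in_closed) (use fne xnf in auto)
  show "ball x (dist_bd G x) \<subseteq> G"
  proof (rule ccontr)
    assume "\<not> ball x (dist_bd G x) \<subseteq> G"
    hence "ball x (dist_bd G x) - G \<noteq> {}" by auto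
    moreover have "ball x (dist_bd G x) \<inter> G \<noteq> {}"
      using assms(2) \<open>dist_bd G x > 0\<close> by (metis IntI centre_in_ball empty_iff)
    ultimately have "ball x (dist_bd G x) \<inter> frontier G \<noteq> {}"
      using connected_Int_frontier[OF connected_ball] by blast
    then obtain y where "y \<in> frontier G" "dist x y < infdist x (frontier G)"
      by (auto simp: dist_bd_def)
    with infdist_le[of y "frontier G" x] show False by simp
  qed
qed

theorem proposition2p1:
  fixes p q :: real
  assumes "1 < q" and "q < p"
  shows "\<exists>c>0. \<forall>(G::'a::euclidean_space set) (M::real) (u::'a \<Rightarrow> real).
     open G \<and> G \<noteq> UNIV \<and> M > 0 \<and> C2_on G u \<and> (\<forall>x\<in>G. u x \<ge> 0) \<and>
     (\<forall>x\<in>G. - laplacian u x + u x powr p - M * norm (grad u x) powr q = 0) \<longrightarrow>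
     (\<forall>x\<in>G. u x \<le> c * max (M powr (1 / (p - q)) * dist_bd G x powr (- q / (p - q)))
                              (dist_bd G x powr (- 2 / (p - 1))))"
proof -
  note q = assms(1) and pq = assms(2)
  define \<beta> where "\<beta> = max (2/(p-1)) (q/(p-q))"
  define N where "N = real DIM('a)"
  define K1 where "K1 = 2*\<beta>*(N+2*\<beta>+2)"
  define C1 where "C1 = (3*K1) powr (1/(p-1)) * 2 powr (2/(p-1))"
  define C2 where "C2 = (3*(2*\<beta>) powr q) powr (1/(p-q)) * 2 powr (q/(p-q))"
  have p1: "p - 1 > 0" and pq0: "p - q > 0" using q pq by auto
  have "2/(p-1) > 0" using p1 by simp
  hence \<beta>0: "\<beta> > 0" by (simp add: \<beta>_def less_max_iff_disj)
  have b1: "\<beta>*(p-1) \<ge> 2"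
  proof -
    have "\<beta> \<ge> 2/(p-1)" by (simp add: \<beta>_def)
    hence "\<beta>*(p-1) \<ge> 2/(p-1)*(p-1)" using p1 by (intro mult_right_mono) auto
    moreover have "2/(p-1)*(p-1) = 2" using p1 by (simp add: field_simps)
    ultimately show ?thesis by linarith
  qed
  have b2: "\<beta>*(p-q) \<ge> q"
  proof -
    have "\<beta> \<ge> q/(p-q)" by (simp add: \<beta>_def)
    hence "\<beta>*(p-q) \<ge> q/(p-q)*(p-q)" using pq0 by (intro mult_right_mono) auto
    moreover have "q/(p-q)*(p-q) = q" using pq0 by (simp add: field_simps)
    ultimately show ?thesis by linarith
  qed
  have N0: "N \<ge> 0" by (simp add: N_def)
  have K10: "K1 > 0" using \<beta>0 N0 by (simp add: K1_def)
  have C10: "C1 > 0" using K10 by (simp add: C1_def)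
  have C20: "C2 > 0" using \<beta>0 by (simp add: C2_def)
  show ?thesis
  proof (intro exI[of _ "C1 + C2"] conjI allI impI ballI)
    show "C1 + C2 > 0" using C10 C20 by simp
    fix G :: "'a set" and M u x
    assume H: "open G \<and> G \<noteq> UNIV \<and> M > 0 \<and> C2_on G u \<and> (\<forall>x\<in>G. u x \<ge> 0) \<and>
     (\<forall>x\<in>G. - laplacian u x + u x powr p - M * norm (grad u x) powr q = 0)"
      and xG: "x \<in> G"
    have G: "open G" "G \<noteq> UNIV" and M: "M > 0" and nonneg: "\<forall>x\<in>G. u x \<ge> 0"
      and eq: "\<forall>x\<in>G. - laplacian u x + u x powr p - M * norm (grad u x) powr q = 0"
      using H by auto
    obtain Du D2u where du: "\<forall>x\<in>G. (u has_derivative blinfun_apply (Du x)) (at x)"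
      and d2u: "\<forall>x\<in>G. (Du has_derivative blinfun_apply (D2u x)) (at x)"
      using H unfolding C2_on_def by blast
    define d where "d = dist_bd G x"
    have d0: "d > 0" and ballG: "ball x d \<subseteq> G"
      using ball_infdist_frontier[OF G(1) xG G(2)] by (auto simp: d_def)
    define r where "r = d/2"
    have r0: "r > 0" using d0 by (simp add: r_def)
    have cbG: "cball x r \<subseteq> G" using ballG d0 by (auto simp: r_def)
    define R2 where "R2 = r^2"
    have R20: "R2 > 0" using r0 by (simp add: R2_def)
    define X1 where "X1 = C1 * d powr (-2/(p-1))"
    define Y where "Y = M powr (1/(p-q)) * d powr (-q/(p-q))"
    define X2 where "X2 = C2 * Y"
    define X where "X = max X1 X2"
    have X10: "X1 > 0" using C10 d0 by (simp add: X1_def)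
    have X20: "X2 > 0" using C20 d0 M by (simp add: X2_def Y_def)
    have X0: "X > 0" using X10 by (simp add: X_def)
    have R2e: "R2 = (d/2) powr 2" using d0 by (simp add: R2_def r_def powr_numeral)
    have R2p: "R2 powr a = 2 powr (-2*a) * d powr (2*a)" for a
    proof -
      have "R2 powr a = (d/2) powr (2*a)" unfolding R2e by (simp add: powr_powr)
      also have "\<dots> = d powr (2*a) / 2 powr (2*a)" using d0 by (simp add: powr_divide)
      finally show ?thesis by (simp add: powr_minus divide_inverse mult.commute)
    qed
    have cond1: "3*K1 / R2 \<le> X powr (p-1)"
    proof -
      have "X1 powr (p-1) = ((3*K1) powr (1/(p-1))) powr (p-1) * (2 powr (2/(p-1))) powr (p-1)
               * (d powr (-2/(p-1))) powr (p-1)"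
        using K10 d0 by (simp add: X1_def C1_def powr_mult)
      also have "\<dots> = 3*K1 * 2 powr 2 * d powr (-2)"
        using powr_div_cancel[of "3*K1" "p-1" 1] powr_div_cancel[of 2 "p-1" 2]
          powr_div_cancel[of d "p-1" "-2"] K10 d0 p1 by simp
      also have "\<dots> = 3*K1 / R2"
        using d0 by (simp add: R2_def r_def powr_minus powr_numeral field_simps)
      finally have "X1 powr (p-1) = 3*K1 / R2" .
      moreover have "X1 powr (p-1) \<le> X powr (p-1)"
        using X10 p1 by (intro powr_mono2) (auto simp: X_def)
      ultimately show ?thesis by simp
    qed
    have cond2: "3*M*(2*\<beta>) powr q * R2 powr (-q/2) \<le> X powr (p-q)"
    proof -
      have "X2 powr (p-q) = ((3*(2*\<beta>) powr q) powr (1/(p-q))) powr (p-q) * (2 powr (q/(p-q))) powr (p-q)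
               * (M powr (1/(p-q))) powr (p-q) * (d powr (-q/(p-q))) powr (p-q)"
        using \<beta>0 d0 M by (simp add: X2_def C2_def Y_def powr_mult)
      also have "\<dots> = 3*(2*\<beta>) powr q * 2 powr q * M * d powr (-q)"
        using powr_div_cancel[of "3*(2*\<beta>) powr q" "p-q" 1] powr_div_cancel[of 2 "p-q" q]
          powr_div_cancel[of M "p-q" 1] powr_div_cancel[of d "p-q" "-q"] \<beta>0 d0 pq0 M by simp
      also have "\<dots> = 3*M*(2*\<beta>) powr q * R2 powr (-q/2)"
        using R2p[of "-q/2"] by (simp add: mult_ac)
      finally have "X2 powr (p-q) = 3*M*(2*\<beta>) powr q * R2 powr (-q/2)" .
      moreover have "X2 powr (p-q) \<le> X powr (p-q)"
        using X20 pq0 by (intro powr_mono2) (auto simp: X_def)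
      ultimately show ?thesis by simp
    qed
    have "u x < (X * R2 powr \<beta>) * (r^2) powr (-\<beta>)"
    proof (rule core[OF G(1) cbG r0 _ \<beta>0 _ M du d2u nonneg eq])
      show "X * R2 powr \<beta> > 0" using X0 R20 by simp
      show "p > 0" using p1 by simp
      fix c0 :: real assume "0 < c0" "c0 \<le> r^2"
      thus "2*(X * R2 powr \<beta>)*\<beta>*(real DIM('a) * c0 powr (-\<beta>-1) + 2*(\<beta>+1)*(r^2-c0)*c0 powr (-\<beta>-2))
       + M*(2*(X * R2 powr \<beta>)*\<beta>*c0 powr (-\<beta>-1) * sqrt (r^2-c0)) powr q
       < ((X * R2 powr \<beta>) * c0 powr (-\<beta>)) powr p"
        using barrier[OF N0 pq q \<beta>0 b1 b2 R20 M X0 _ _ cond1[unfolded K1_def] cond2]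
        by (simp add: R2_def N_def)
    qed
    also have "(X * R2 powr \<beta>) * (r^2) powr (-\<beta>) = X"
      using R20 by (simp add: R2_def powr_minus field_simps)
    also have "X \<le> (C1 + C2) * max Y (d powr (-2/(p-1)))"
    proof -
      have "X1 \<le> (C1 + C2) * max Y (d powr (-2/(p-1)))"
        unfolding X1_def using C10 C20 by (intro mult_mono) auto
      moreover have "X2 \<le> (C1 + C2) * max Y (d powr (-2/(p-1)))"
        unfolding X2_def using C10 C20 M d0 by (intro mult_mono) (auto simp: Y_def)
      ultimately show ?thesis by (simp add: X_def)
    qed
    finally show "u x \<le> (C1 + C2) * max (M powr (1 / (p - q)) * dist_bd G x powr (- q / (p - q)))
                              (dist_bd G x powr (- 2 / (p - 1)))"
      by (simp add: Y_def d_def)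
  qed
qed

end
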